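(* Let $\lambda\in\mathbb{R}$ and define, for $x>0$, $$f_\lambda(x)=[\psi'(x)]^2+\psi''(x)-\frac{x^2+\lambda x+12}{12x^4(x+1)^2}.$$ Then $-f_\lambda$ is completely monotonic on $(0,\infty)$ if and only if $\lambda\ge 4$.
   Context: $\Gamma$ is Euler's gamma function, $\psi=\Gamma'/\Gamma$ is the digamma function, and $\psi',\psi''$ are its first and second derivatives. A function $f$ is completely monotonic on an interval $I$ if $f$ has derivatives of all orders on $I$ and $0\le(-1)^n f^{(n)}(x)<\infty$ for all $x\in I$ and all integers $n\ge0$. *)

theory Defs
  imports "HOL-Analysis.Analysis"
begin

definition completely_monotonic_on :: "real set \<Rightarrow> (real \<Rightarrow> real) \<Rightarrow> bool" where
  "completely_monotonic_on I f \<longleftrightarrow>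
     (\<forall>n. \<forall>x\<in>I. ((deriv ^^ n) f has_real_derivative (deriv ^^ Suc n) f x) (at x)) \<and>
     (\<forall>n. \<forall>x\<in>I. (-1) ^ n * (deriv ^^ n) f x \<ge> 0)"

definition f_lam :: "real \<Rightarrow> real \<Rightarrow> real" where
  "f_lam lam x = (Polygamma 1 x)\<^sup>2 + Polygamma 2 x
      - (x\<^sup>2 + lam * x + 12) / (12 * x ^ 4 * (x + 1)\<^sup>2)"

end

theory Submission
  imports Defs
begin



definition hasD :: "(real \<Rightarrow> real) \<Rightarrow> (nat \<Rightarrow> real \<Rightarrow> real) \<Rightarrow> bool" where
  "hasD f D \<longleftrightarrow> (\<forall>x>0. D 0 x = f x) \<and> (\<forall>n. \<forall>x>0. (D n has_real_derivative D (Suc n) x) (at x))"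

lemma hasD_deriv:
  assumes "hasD f D" "x > 0"
  shows "(deriv ^^ n) f x = D n x"
  using assms(2)
proof (induction n arbitrary: x)
  case 0 then show ?case using assms(1) by (simp add: hasD_def)
next
  case (Suc n x)
  have ev: "eventually (\<lambda>y. y \<in> {0<..}) (nhds x)"
    using Suc.prems by (intro eventually_nhds_in_open) auto
  have "eventually (\<lambda>y. (deriv ^^ n) f y = D n y) (nhds x)"
    using ev by eventually_elim (use Suc.IH in auto)
  then have "deriv ((deriv ^^ n) f) x = deriv (D n) x"
    by (rule deriv_cong_ev) simp
  also have "\<dots> = D (Suc n) x"
    using assms(1) Suc.prems by (intro DERIV_imp_deriv) (auto simp: hasD_def)
  finally show ?case by simp
qed

lemma hasD_cm:
  assumes "hasD f D" "\<And>n x. x > 0 \<Longrightarrow> (-1) ^ n * D n x \<ge> 0"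
  shows "completely_monotonic_on {0<..} f"
  unfolding completely_monotonic_on_def
proof (intro conjI allI ballI)
  fix n and x :: real assume x: "x \<in> {0<..}"
  have der: "(D n has_real_derivative D (Suc n) x) (at x)"
    using assms(1) x by (auto simp: hasD_def)
  have "((deriv ^^ n) f has_real_derivative D (Suc n) x) (at x)"
    by (rule has_field_derivative_transform_within_open[OF der, of "{0<..}"]) (use x hasD_deriv[OF assms(1)] in auto)
  then show "((deriv ^^ n) f has_real_derivative (deriv ^^ Suc n) f x) (at x)"
    using hasD_deriv[OF assms(1), of x "Suc n"] x by simp
next
  fix n and x :: real assume x: "x \<in> {0<..}"
  show "0 \<le> (- 1) ^ n * (deriv ^^ n) f x"
    using assms(2)[of x n] hasD_deriv[OF assms(1), of x n] x by simp
qed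

lemma cm_hasD:
  assumes "completely_monotonic_on {0<..} f"
  shows "hasD f (\<lambda>n. (deriv ^^ n) f)"
  using assms by (auto simp: completely_monotonic_on_def hasD_def)


lemma hasD_add:
  assumes "hasD f Df" "hasD g Dg"
  shows "hasD (\<lambda>x. f x + g x) (\<lambda>n x. Df n x + Dg n x)"
  using assms unfolding hasD_def by (auto intro!: derivative_eq_intros)

lemma hasD_scale:
  assumes "hasD f Df"
  shows "hasD (\<lambda>x. c * f x) (\<lambda>n x. c * Df n x)"
  using assms unfolding hasD_def by (auto intro!: derivative_eq_intros)

lemma hasD_shift:
  assumes "hasD f Df"
  shows "hasD (\<lambda>x. f (x + 1)) (\<lambda>n x. Df n (x + 1))"
  using assms unfolding hasD_def
  by (auto simp: DERIV_shift[symmetric])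


lemma hasD_unique:
  assumes "hasD f D1" "hasD g D2" "\<And>x. x > 0 \<Longrightarrow> f x = g x" "x > 0"
  shows "D1 n x = D2 n x"
proof -
  have "hasD f D2" using assms(2,3) by (auto simp: hasD_def)
  then show ?thesis using hasD_deriv[OF assms(1) assms(4)] hasD_deriv[OF _ assms(4)] by metis
qed

lemma Suc_choose': "Suc n choose k = (n choose k) + (if k = 0 then 0 else (n choose (k-1)))"
  by (cases k) simp_all

lemma hasD_mult:
  assumes "hasD f Df" "hasD g Dg"
  shows "hasD (\<lambda>x. f x * g x) (\<lambda>n x. \<Sum>i=0..n. of_nat (n choose i) * Df i x * Dg (n-i) x)"
  unfolding hasD_def
proof (intro conjI allI impI)
  fix x :: real assume "x > 0" then show "(\<Sum>i=0..0. of_nat (0 choose i) * Df i x * Dg (0-i) x) = f x * g x"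
    using assms by (simp add: hasD_def)
next
  fix n and x :: real assume x: "x > 0"
  have *: "\<And>i. (Df i has_real_derivative Df (Suc i) x) (at x)" "\<And>i. (Dg i has_real_derivative Dg (Suc i) x) (at x)"
    using assms x by (auto simp: hasD_def)
  have sumeq: "(\<Sum>i = 0..n.
               of_nat (n choose i) * (Df (Suc i) x * Dg (n-i) x + Dg (Suc (n-i)) x * Df i x)) =
            Dg 0 x * Df (Suc n) x + (\<Sum>i = 0..n. Df i x * (of_nat (Suc n choose i) * Dg (Suc n - i) x))"
    apply (simp add: Suc_choose' algebra_simps sum.distrib)
    apply (subst (4) sum_Suc_reindex)
    apply (auto simp: algebra_simps Suc_diff_le intro: sum.cong)
    done
  have "((\<lambda>x. \<Sum>i=0..n. of_nat (n choose i) * (Df i x * Dg (n-i) x)) has_real_derivative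
     (\<Sum>i = 0..n. of_nat (n choose i) * (Df (Suc i) x * Dg (n-i) x + Dg (Suc (n-i)) x * Df i x))) (at x)"
    by (rule DERIV_sum) (rule DERIV_cmult[OF DERIV_mult[OF *(1) *(2)]])
  then have "((\<lambda>x. \<Sum>i=0..n. of_nat (n choose i) * Df i x * Dg (n-i) x) has_real_derivative
     (\<Sum>i = 0..n. of_nat (n choose i) * (Df (Suc i) x * Dg (n-i) x + Dg (Suc (n-i)) x * Df i x))) (at x)"
    by (simp add: mult.assoc)
  also have "(\<Sum>i = 0..n. of_nat (n choose i) * (Df (Suc i) x * Dg (n-i) x + Dg (Suc (n-i)) x * Df i x))
     = (\<Sum>i=0..Suc n. of_nat (Suc n choose i) * Df i x * Dg (Suc n-i) x)"
    unfolding sumeq by (simp add: algebra_simps)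
  finally show "((\<lambda>x. \<Sum>i=0..n. of_nat (n choose i) * Df i x * Dg (n-i) x) has_real_derivative
     (\<Sum>i=0..Suc n. of_nat (Suc n choose i) * Df i x * Dg (Suc n-i) x)) (at x)" .
qed

lemma hasD_invpow:
  assumes "a \<ge> 0"
  shows "hasD (\<lambda>x. 1 / (x + a) ^ m) (\<lambda>n x. (-1) ^ n * pochhammer (real m) n / (x + a) ^ (m + n))"
  unfolding hasD_def
proof (intro conjI allI impI)
  fix n and x :: real assume x: "x > 0"
  have pos: "x + a > 0" using x assms by simp
  have "((\<lambda>x. (-1) ^ n * pochhammer (real m) n * inverse ((x + a) ^ (m + n))) has_real_derivative
      (-1) ^ n * pochhammer (real m) n * (- (real (m + n) * (x + a) ^ (m + n - 1)) / ((x + a) ^ (m + n))\<^sup>2)) (at x)"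
    using pos by (auto intro!: derivative_eq_intros simp: power2_eq_square field_simps)
  also have "(-1) ^ n * pochhammer (real m) n * (- (real (m + n) * (x + a) ^ (m + n - 1)) / ((x + a) ^ (m + n))\<^sup>2)
      = (-1) ^ Suc n * pochhammer (real m) (Suc n) / (x + a) ^ (m + Suc n)"
  proof (cases "m + n = 0")
    case True then show ?thesis by (simp add: pochhammer_rec')
  next
    case False
    then obtain k where k: "m + n = Suc k" using not0_implies_Suc by blast
    have yk: "(x + a) ^ k > 0" using pos by simp
    have h1: "(x+a)^(m+n-1) = (x+a)^k" "(x+a)^(m+n) = (x+a)^k*(x+a)"
       "(x+a)^(m + Suc n) = (x+a)^k*(x+a)*(x+a)" "real (m+n) = real m + real n"
      using k by auto
    have gen: "\<And>Y z c r. Y \<noteq> 0 \<Longrightarrow> (z::real) \<noteq> 0 \<Longrightarrow> c * (- (r * Y) / (Y * z)\<^sup>2) = - c * r / (Y * z * z)"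
      by (simp add: power2_eq_square)
    have yk2: "(x + a) ^ k \<noteq> 0" "x + a \<noteq> 0" using pos by auto
    show ?thesis unfolding h1 gen[OF yk2]
      by (simp add: pochhammer_rec' algebra_simps)
  qed
  finally show "((\<lambda>x. (-1) ^ n * pochhammer (real m) n / (x + a) ^ (m + n)) has_real_derivative
      (-1) ^ Suc n * pochhammer (real m) (Suc n) / (x + a) ^ (m + Suc n)) (at x)"
    by (simp add: divide_inverse)
qed simp

lemma pos_not_nonpos_Int: "(x::real) > 0 \<Longrightarrow> x \<notin> \<int>\<^sub>\<le>\<^sub>0"
  by (auto elim!: nonpos_Ints_cases)

lemma hasD_Polygamma: "hasD (Polygamma m) (\<lambda>n. Polygamma (m + n))"
  unfolding hasD_def
  by (auto intro!: has_field_derivative_Polygamma pos_not_nonpos_Int)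




definition Zinf :: "(nat \<Rightarrow> real \<Rightarrow> real) \<Rightarrow> bool" where
  "Zinf D \<longleftrightarrow> (\<forall>n. (D n \<longlongrightarrow> 0) at_top)"

lemma Zinf_add: "Zinf Df \<Longrightarrow> Zinf Dg \<Longrightarrow> Zinf (\<lambda>n x. Df n x + Dg n x)"
  unfolding Zinf_def by (auto intro!: tendsto_add_zero)

lemma Zinf_scale: "Zinf Df \<Longrightarrow> Zinf (\<lambda>n x. c * Df n x)"
  unfolding Zinf_def by (auto intro!: tendsto_mult_right_zero)

lemma Zinf_mult: "Zinf Df \<Longrightarrow> Zinf Dg \<Longrightarrow>
   Zinf (\<lambda>n x. \<Sum>i=0..n. of_nat (n choose i) * Df i x * Dg (n-i) x)"
  unfolding Zinf_def
  by (auto intro!: tendsto_null_sum tendsto_mult_zero tendsto_mult_right_zero)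

lemma Zinf_invpow:
  assumes "m \<ge> 1"
  shows "Zinf (\<lambda>n x. (-1) ^ n * pochhammer (real m) n / (x + a) ^ (m + n))"
  unfolding Zinf_def
proof
  fix n
  have "filterlim (\<lambda>x::real. x + a) at_top at_top"
    using filterlim_tendsto_add_at_top[OF tendsto_const filterlim_ident, of a] by (simp add: add.commute)
  then have "filterlim (\<lambda>x::real. (x + a) ^ (m + n)) at_top at_top"
    using assms by (intro filterlim_pow_at_top) auto
  then have "filterlim (\<lambda>x::real. (x + a) ^ (m + n)) at_infinity at_top"
    by (rule filterlim_at_top_imp_at_infinity)
  then show "((\<lambda>x. (-1) ^ n * pochhammer (real m) n / (x + a) ^ (m + n)) \<longlongrightarrow> 0) at_top"
    by (intro tendsto_divide_0[OF tendsto_const])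
qed

lemma Polygamma_bound:
  assumes k: "k \<ge> 1" and y: "y \<ge> (1::real)"
  shows "\<bar>Polygamma k y\<bar> \<le> fact k * 2 / y"
proof -
  have s1: "(\<lambda>j. inverse ((y + of_nat j) ^ Suc k)) sums ((-1) ^ Suc k * Polygamma k y / fact k)"
    using y k by (intro Polygamma_LIMSEQ) auto
  have lim: "(\<lambda>j. 2 / (y + real j)) \<longlonglongrightarrow> 0"
  proof -
    have "filterlim (\<lambda>j. y + real j) at_top sequentially"
      by (rule filterlim_tendsto_add_at_top[OF tendsto_const filterlim_real_sequentially])
    then show ?thesis
      by (intro tendsto_divide_0[OF tendsto_const] filterlim_at_top_imp_at_infinity)
  qed
  have s2: "(\<lambda>j. 2 / (y + real j) - 2 / (y + real (Suc j))) sums (2 / (y + real 0) - 0)"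
    by (rule telescope_sums'[OF lim])
  have le: "inverse ((y + of_nat j) ^ Suc k) \<le> 2 / (y + real j) - 2 / (y + real (Suc j))" for j
  proof -
    define t where "t = y + real j"
    have t: "t \<ge> 1" using y by (simp add: t_def)
    have "inverse (t ^ Suc k) \<le> inverse (t ^ 2)"
      using t k by (intro le_imp_inverse_le power_increasing) auto
    also have "inverse (t ^ 2) \<le> 2 / t - 2 / (t + 1)"
    proof -
      have tt: "t \<le> t * t" using t mult_left_mono[of 1 t t] by simp
      have tp: "t \<noteq> 0" "t + 1 \<noteq> 0" using t by auto
      have e: "2 / t - 2 / (t + 1) = 2 / (t * (t + 1))" using tp by (simp add: field_simps)
      have tpos: "t > 0" using t by simp
      have "2 / (2 * (t * t)) \<le> 2 / (t * (t + 1))"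
      proof (rule divide_left_mono)
        show "t * (t + 1) \<le> 2 * (t * t)" using tt by (simp add: algebra_simps)
        show "0 < 2 * (t * t) * (t * (t + 1))" using tpos by simp
      qed simp
      then have "1 / (t * t) \<le> 2 / (t * (t + 1))" by simp
      then show ?thesis unfolding e by (simp add: power2_eq_square divide_inverse)
    qed
    finally show ?thesis by (simp add: t_def add_ac)
  qed
  have ge: "0 \<le> inverse ((y + of_nat j) ^ Suc k)" for j using y by simp
  have S1: "(-1) ^ Suc k * Polygamma k y / fact k \<le> 2 / y"
    using sums_le[OF _ s1 s2] le by simp
  have S0: "0 \<le> (-1) ^ Suc k * Polygamma k y / fact k"
    using sums_le[OF _ sums_zero s1] ge by simp
  have "\<bar>Polygamma k y\<bar> = fact k * \<bar>(-1) ^ Suc k * Polygamma k y / fact k\<bar>"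
    by (simp add: abs_mult)
  also have "\<dots> \<le> fact k * (2 / y)"
    using S0 S1 by (intro mult_left_mono) auto
  finally show ?thesis by simp
qed

lemma Polygamma_tendsto_0:
  assumes "k \<ge> 1"
  shows "(Polygamma k \<longlongrightarrow> (0::real)) at_top"
proof (rule Lim_null_comparison)
  show "eventually (\<lambda>y. norm (Polygamma k y) \<le> fact k * 2 / y) at_top"
    using eventually_ge_at_top[of "1::real"] by eventually_elim (use Polygamma_bound assms in auto)
  show "((\<lambda>y::real. fact k * 2 / y) \<longlongrightarrow> 0) at_top"
    by (intro tendsto_divide_0[OF tendsto_const] filterlim_at_top_imp_at_infinity filterlim_ident)
qed

lemma Zinf_Polygamma: "m \<ge> 1 \<Longrightarrow> Zinf (\<lambda>n. Polygamma (m + n))"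
  unfolding Zinf_def by (auto intro!: Polygamma_tendsto_0)

lemma telescope_cm:
  assumes F: "hasD F DF" and G: "hasD G DG"
    and eq: "\<And>x. x > 0 \<Longrightarrow> F x = G x + F (x + 1)"
    and Z: "Zinf DF" and Gcm: "\<And>n x. x > 0 \<Longrightarrow> (-1) ^ n * DG n x \<ge> 0"
    and x: "x > 0"
  shows "(-1) ^ n * DF n x \<ge> 0"
proof -
  have H: "hasD (\<lambda>x. G x + F (x + 1)) (\<lambda>n x. DG n x + DF n (x + 1))"
    by (rule hasD_add[OF G hasD_shift[OF F]])
  have rec: "DF n y = DG n y + DF n (y + 1)" if "y > 0" for y
    using hasD_unique[OF F H eq that] .
  have step: "(-1) ^ n * DF n x \<ge> (-1) ^ n * DF n (x + real N)" for N
  proof (induction N)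
    case 0 then show ?case by simp
  next
    case (Suc N)
    have "(-1) ^ n * DF n (x + real N) = (-1) ^ n * DG n (x + real N) + (-1) ^ n * DF n (x + real N + 1)"
      using rec[of "x + real N"] x by (simp add: algebra_simps)
    moreover have "(-1) ^ n * DG n (x + real N) \<ge> 0" using Gcm x by simp
    ultimately show ?case using Suc.IH by (simp add: add_ac)
  qed
  have "filterlim (\<lambda>N. x + real N) at_top sequentially"
    by (rule filterlim_tendsto_add_at_top[OF tendsto_const filterlim_real_sequentially])
  moreover have "(DF n \<longlongrightarrow> 0) at_top" using Z unfolding Zinf_def by auto
  ultimately have "(\<lambda>N. DF n (x + real N)) \<longlonglongrightarrow> 0"
    by (rule filterlim_compose[of "DF n", rotated])
  then have "(\<lambda>N. (-1) ^ n * DF n (x + real N)) \<longlonglongrightarrow> (-1) ^ n * 0"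
    by (intro tendsto_mult tendsto_const)
  then have L: "(\<lambda>N. (-1) ^ n * DF n (x + real N)) \<longlonglongrightarrow> 0" by simp
  show ?thesis by (rule LIMSEQ_le_const2[OF L]) (use step in auto)
qed

lemma telescope_le:
  fixes F B :: "real \<Rightarrow> real"
  assumes step: "\<And>x. x \<ge> x0 \<Longrightarrow> F x - F (x + 1) \<le> B x - B (x + 1)"
    and F0: "(F \<longlongrightarrow> 0) at_top" and B0: "(B \<longlongrightarrow> 0) at_top" and x: "x \<ge> x0"
  shows "F x \<le> B x"
proof -
  have st: "F x - B x \<le> F (x + real N) - B (x + real N)" for N
  proof (induction N)
    case 0 then show ?case by simp
  next
    case (Suc N)
    have "F (x + real N) - F (x + real N + 1) \<le> B (x + real N) - B (x + real N + 1)"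
      using step[of "x + real N"] x by simp
    then show ?case using Suc.IH by (simp add: add_ac)
  qed
  have "filterlim (\<lambda>N. x + real N) at_top sequentially"
    by (rule filterlim_tendsto_add_at_top[OF tendsto_const filterlim_real_sequentially])
  then have "(\<lambda>N. F (x + real N) - B (x + real N)) \<longlonglongrightarrow> 0 - 0"
    by (intro tendsto_diff filterlim_compose[OF F0 _] filterlim_compose[OF B0 _])
  then have L: "(\<lambda>N. F (x + real N) - B (x + real N)) \<longlonglongrightarrow> 0" by simp
  have "F x - B x \<le> 0" by (rule LIMSEQ_le_const[OF L]) (use st in auto)
  then show ?thesis by simp
qed



definition cmD :: "(nat \<Rightarrow> real \<Rightarrow> real) \<Rightarrow> bool" where
  "cmD D \<longleftrightarrow> (\<forall>n x. x > 0 \<longrightarrow> (-1) ^ n * D n x \<ge> 0)"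

definition SZ :: "(real \<Rightarrow> real) \<Rightarrow> bool" where
  "SZ f \<longleftrightarrow> (\<exists>D. hasD f D \<and> Zinf D)"

definition SC :: "(real \<Rightarrow> real) \<Rightarrow> bool" where
  "SC f \<longleftrightarrow> (\<exists>D. hasD f D \<and> cmD D)"

lemma hasD_cong: "hasD f D \<Longrightarrow> (\<And>x. x > 0 \<Longrightarrow> f x = g x) \<Longrightarrow> hasD g D"
  by (auto simp: hasD_def)

lemma SZ_cong: "SZ f \<Longrightarrow> (\<And>x. x > 0 \<Longrightarrow> f x = g x) \<Longrightarrow> SZ g"
  unfolding SZ_def using hasD_cong by blast

lemma SC_cong: "SC f \<Longrightarrow> (\<And>x. x > 0 \<Longrightarrow> f x = g x) \<Longrightarrow> SC g"
  unfolding SC_def using hasD_cong by blast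

lemma SZ_add: "SZ f \<Longrightarrow> SZ g \<Longrightarrow> SZ (\<lambda>x. f x + g x)"
  unfolding SZ_def using hasD_add Zinf_add by blast

lemma SZ_scale: "SZ f \<Longrightarrow> SZ (\<lambda>x. c * f x)"
  unfolding SZ_def using hasD_scale Zinf_scale by blast

lemma SZ_diff: "SZ f \<Longrightarrow> SZ g \<Longrightarrow> SZ (\<lambda>x. f x - g x)"
proof -
  assume "SZ f" "SZ g"
  then have "SZ (\<lambda>x. f x + (-1) * g x)" by (intro SZ_add SZ_scale)
  then show ?thesis by (rule SZ_cong) simp
qed

lemma SZ_mult: "SZ f \<Longrightarrow> SZ g \<Longrightarrow> SZ (\<lambda>x. f x * g x)"
  unfolding SZ_def using hasD_mult Zinf_mult by blast

lemma SZ_ip: "a \<ge> 0 \<Longrightarrow> m \<ge> 1 \<Longrightarrow> SZ (\<lambda>x. (1 / (x + a)) ^ m)"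
proof -
  assume "a \<ge> 0" "m \<ge> 1"
  then have "SZ (\<lambda>x. 1 / (x + a) ^ m)"
    unfolding SZ_def using hasD_invpow Zinf_invpow by blast
  then show ?thesis by (rule SZ_cong) (simp add: power_one_over)
qed

lemma SZ_ip1: "a \<ge> 0 \<Longrightarrow> SZ (\<lambda>x. 1 / (x + a))"
  using SZ_ip[of a 1] by simp

lemma SZ_ip0: "m \<ge> 1 \<Longrightarrow> SZ (\<lambda>x. (1 / x) ^ m)"
  using SZ_ip[of 0 m] by simp

lemma SZ_ip01: "SZ (\<lambda>x. 1 / x)"
  using SZ_ip[of 0 1] by simp

lemma SZ_Polygamma: "m \<ge> 1 \<Longrightarrow> SZ (Polygamma m)"
  unfolding SZ_def using hasD_Polygamma Zinf_Polygamma by blast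


lemma SZ_tendsto: "SZ f \<Longrightarrow> (f \<longlongrightarrow> 0) at_top"
proof -
  assume "SZ f"
  then obtain D where D: "hasD f D" "Zinf D" by (auto simp: SZ_def)
  have "(D 0 \<longlongrightarrow> 0) at_top" using D(2) by (simp add: Zinf_def)
  moreover have "eventually (\<lambda>x. D 0 x = f x) at_top"
    using eventually_gt_at_top[of "0::real"] by eventually_elim (use D(1) in \<open>simp add: hasD_def\<close>)
  ultimately show ?thesis using tendsto_cong by blast
qed

lemma cmD_add: "cmD Df \<Longrightarrow> cmD Dg \<Longrightarrow> cmD (\<lambda>n x. Df n x + Dg n x)"
  unfolding cmD_def by (auto simp: algebra_simps intro: add_nonneg_nonneg)

lemma cmD_scale: "c \<ge> 0 \<Longrightarrow> cmD Df \<Longrightarrow> cmD (\<lambda>n x. c * Df n x)"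
  unfolding cmD_def
proof (intro allI impI)
  fix n and x :: real
  assume "c \<ge> 0" "\<forall>n x. 0 < x \<longrightarrow> 0 \<le> (- 1) ^ n * Df n x" "x > 0"
  then have "0 \<le> c * ((- 1) ^ n * Df n x)" by simp
  then show "0 \<le> (- 1) ^ n * (c * Df n x)" by (simp add: algebra_simps)
qed

lemma cmD_mult: "cmD Df \<Longrightarrow> cmD Dg \<Longrightarrow>
   cmD (\<lambda>n x. \<Sum>i=0..n. of_nat (n choose i) * Df i x * Dg (n-i) x)"
  unfolding cmD_def
proof (intro allI impI)
  fix n and x :: real
  assume f: "\<forall>n x. 0 < x \<longrightarrow> 0 \<le> (- 1) ^ n * Df n x" and g: "\<forall>n x. 0 < x \<longrightarrow> 0 \<le> (- 1) ^ n * Dg n x"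
    and x: "x > 0"
  have "(- 1) ^ n * (\<Sum>i=0..n. of_nat (n choose i) * Df i x * Dg (n-i) x)
      = (\<Sum>i=0..n. of_nat (n choose i) * ((- 1) ^ i * Df i x) * ((-1) ^ (n - i) * Dg (n-i) x))"
    unfolding sum_distrib_left
  proof (rule sum.cong)
    fix i assume "i \<in> {0..n}"
    then have "(-1::real) ^ n = (-1) ^ i * (-1) ^ (n - i)"
      by (simp add: power_add[symmetric])
    then show "(- 1) ^ n * (of_nat (n choose i) * Df i x * Dg (n - i) x) =
         of_nat (n choose i) * ((- 1) ^ i * Df i x) * ((- 1) ^ (n - i) * Dg (n - i) x)"
      by (simp add: algebra_simps)
  qed simp
  also have "\<dots> \<ge> 0"
  proof (rule sum_nonneg)
    fix i
    have a: "0 \<le> (- 1) ^ i * Df i x" using f x by blast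
    have b: "0 \<le> (- 1) ^ (n - i) * Dg (n - i) x" using g x by blast
    show "0 \<le> of_nat (n choose i) * ((- 1) ^ i * Df i x) * ((-1) ^ (n - i) * Dg (n-i) x)"
      using a b by simp
  qed
  finally show "0 \<le> (- 1) ^ n * (\<Sum>i=0..n. of_nat (n choose i) * Df i x * Dg (n-i) x)" .
qed

lemma cmD_invpow: "a \<ge> 0 \<Longrightarrow> cmD (\<lambda>n x. (-1) ^ n * pochhammer (real m) n / (x + a) ^ (m + n))"
  unfolding cmD_def
proof (intro allI impI)
  fix n and x :: real assume "a \<ge> 0" "x > 0"
  moreover have "0 \<le> pochhammer (real m) n"
    by (cases "m = 0") (auto simp: pochhammer_0_left intro!: pochhammer_nonneg)
  ultimately have "0 \<le> pochhammer (real m) n / (x + a) ^ (m + n)"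
    by (intro divide_nonneg_pos) auto
  then show "0 \<le> (- 1) ^ n * ((- 1) ^ n * pochhammer (real m) n / (x + a) ^ (m + n))"
    by (simp add: power_mult_distrib[symmetric])
qed

lemma SC_add: "SC f \<Longrightarrow> SC g \<Longrightarrow> SC (\<lambda>x. f x + g x)"
  unfolding SC_def using hasD_add cmD_add by blast

lemma SC_scale: "c \<ge> 0 \<Longrightarrow> SC f \<Longrightarrow> SC (\<lambda>x. c * f x)"
  unfolding SC_def using hasD_scale cmD_scale by blast

lemma SC_mult: "SC f \<Longrightarrow> SC g \<Longrightarrow> SC (\<lambda>x. f x * g x)"
  unfolding SC_def using hasD_mult cmD_mult by blast

lemma SC_ip: "a \<ge> 0 \<Longrightarrow> SC (\<lambda>x. (1 / (x + a)) ^ m)"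
proof -
  assume "a \<ge> 0"
  then have "SC (\<lambda>x. 1 / (x + a) ^ m)"
    unfolding SC_def using hasD_invpow cmD_invpow by blast
  then show ?thesis by (rule SC_cong) (simp add: power_one_over)
qed

lemma SC_ip1: "a \<ge> 0 \<Longrightarrow> SC (\<lambda>x. 1 / (x + a))"
  using SC_ip[of a 1] by simp

lemma SC_ip0: "SC (\<lambda>x. (1 / x) ^ m)"
  using SC_ip[of 0 m] by simp

lemma SC_ip01: "SC (\<lambda>x. 1 / x)"
  using SC_ip[of 0 1] by simp

lemma SC_telescope:
  assumes "SZ F" "SC G" "\<And>x. x > 0 \<Longrightarrow> F x = G x + F (x + 1)"
  shows "SC F"
proof -
  obtain DF where F: "hasD F DF" "Zinf DF" using assms(1) by (auto simp: SZ_def)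
  obtain DG where G: "hasD G DG" "cmD DG" using assms(2) by (auto simp: SC_def)
  have "cmD DF"
    unfolding cmD_def using telescope_cm[OF F(1) G(1) assms(3) F(2)] G(2)
    by (auto simp: cmD_def)
  then show ?thesis using F(1) by (auto simp: SC_def)
qed

lemma SC_cm: "SC f \<Longrightarrow> completely_monotonic_on {0<..} f"
  unfolding SC_def cmD_def using hasD_cm by blast



definition Rf :: "real \<Rightarrow> real" where
  "Rf x = 1/12 * (-38 * (1/x) + 29 * (1/x)^2 - 20 * (1/x)^3 + 12 * (1/x)^4 + 38 * (1/(x+1)) + 9 * (1/(x+1))^2)"

definition Pf :: "real \<Rightarrow> real" where
  "Pf x = 1/6 * (1/x) + (1/x)^2 + 17/3 * (1/(x+1)) - 3 * (1/(x+1))^2 + 11/6 * (1/(x+1))^3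
     - 1/2 * (1/(x+1))^4 - 29/6 * (1/(x+2)) - 3/2 * (1/(x+2))^2"

definition Hf :: "real \<Rightarrow> real" where
  "Hf x = 11/60 * ((1/x)^1 * (1/(x+1))^4 * (1/(x+2))^1) + 53/60 * ((1/(x+1))^4 * (1/(x+2))^2)
     + 29/15 * ((1/(x+1))^2 * (1/(x+2))^4) + 3/2 * ((1/(x+2))^4 * (1/(x+3))^2)
     + 7/3 * ((1/(x+1))^1 * (1/(x+2))^4 * (1/(x+3))^1) + 6/5 * ((1/x)^1 * (1/(x+1))^4 * (1/(x+2))^4)"

definition Qf :: "real \<Rightarrow> real" where
  "Qf x = Pf x - Polygamma 1 x"

definition Ff :: "real \<Rightarrow> real" where
  "Ff x = Rf x - Polygamma 1 x * Polygamma 1 x - Polygamma 2 x"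

definition Gf :: "real \<Rightarrow> real" where
  "Gf x = 2 * ((1/x)^2 * Qf x)"

lemma SC_Hf: "SC Hf"
proof -
  have "SC (\<lambda>x. 11/60 * ((1/x)^1 * (1/(x+1))^4 * (1/(x+2))^1) + 53/60 * ((1/(x+1))^4 * (1/(x+2))^2)
     + 29/15 * ((1/(x+1))^2 * (1/(x+2))^4) + 3/2 * ((1/(x+2))^4 * (1/(x+3))^2)
     + 7/3 * ((1/(x+1))^1 * (1/(x+2))^4 * (1/(x+3))^1) + 6/5 * ((1/x)^1 * (1/(x+1))^4 * (1/(x+2))^4))"
    by (intro SC_add SC_scale SC_mult SC_ip SC_ip0) auto
  then show ?thesis by (simp add: Hf_def[abs_def])
qed

lemma SZ_Qf: "SZ Qf"
proof -
  have "SZ (\<lambda>x. 1/6 * (1/x) + (1/x)^2 + 17/3 * (1/(x+1)) - 3 * (1/(x+1))^2 + 11/6 * (1/(x+1))^3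
     - 1/2 * (1/(x+1))^4 - 29/6 * (1/(x+2)) - 3/2 * (1/(x+2))^2 - Polygamma 1 x)"
    by (intro SZ_add SZ_diff SZ_scale SZ_ip SZ_ip1 SZ_ip0 SZ_ip01 SZ_Polygamma) auto
  then show ?thesis by (simp add: Qf_def[abs_def] Pf_def)
qed

lemma SZ_Ff: "SZ Ff"
proof -
  have "SZ (\<lambda>x. 1/12 * (-38 * (1/x) + 29 * (1/x)^2 - 20 * (1/x)^3 + 12 * (1/x)^4 + 38 * (1/(x+1)) + 9 * (1/(x+1))^2)
          - Polygamma 1 x * Polygamma 1 x - Polygamma 2 x)"
    by (intro SZ_add SZ_diff SZ_scale SZ_mult SZ_ip SZ_ip1 SZ_ip0 SZ_ip01 SZ_Polygamma) auto
  then show ?thesis by (simp add: Ff_def[abs_def] Rf_def)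
qed

lemma Qf_rec:
  assumes x: "x > 0"
  shows "Qf x = Hf x + Qf (x + 1)"
proof -
  define a1 a2 a3 a4 where "a1 = 1/x" "a2 = 1/(x+1)" "a3 = 1/(x+2)" "a4 = 1/(x+3)"
  have r: "x*a1 = 1" "(x+1)*a2 = 1" "(x+2)*a3 = 1" "(x+3)*a4 = 1" using x by (auto simp: a1_a2_a3_a4_def)
  have e: "1/x = a1" "1/(x+1) = a2" "1/(x+1+1) = a3" "1/(x+2) = a3" "1/(x+1+2) = a4" "1/(x+3) = a4"
    by (auto simp: a1_a2_a3_a4_def add.assoc)
  have p: "Polygamma 1 (x + 1) = Polygamma 1 x - a1^2"
    using x by (simp add: Polygamma_plus1 a1_a2_a3_a4_def power_one_over power2_eq_square power3_eq_cube)
  show ?thesis unfolding Qf_def Pf_def Hf_def p e using r by algebra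
qed

lemma Ff_rec:
  assumes x: "x > 0"
  shows "Ff x = Gf x + Ff (x + 1)"
proof -
  define a1 a2 a3 a4 where "a1 = 1/x" "a2 = 1/(x+1)" "a3 = 1/(x+2)" "a4 = 1/(x+3)"
  have r: "x*a1 = 1" "(x+1)*a2 = 1" "(x+2)*a3 = 1" "(x+3)*a4 = 1" using x by (auto simp: a1_a2_a3_a4_def)
  have e: "1/x = a1" "1/(x+1) = a2" "1/(x+1+1) = a3" "1/(x+2) = a3" "1/(x+1+2) = a4" "1/(x+3) = a4"
    by (auto simp: a1_a2_a3_a4_def add.assoc)
  have p: "Polygamma 1 (x + 1) = Polygamma 1 x - a1^2" "Polygamma 2 (x + 1) = Polygamma 2 x + 2 * a1^3"
    using x by (simp_all add: Polygamma_plus1 a1_a2_a3_a4_def power_one_over power2_eq_square power3_eq_cube)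
  show ?thesis unfolding Ff_def Gf_def Qf_def Rf_def Pf_def p e using r by algebra
qed

lemma SC_Qf: "SC Qf"
  by (rule SC_telescope[OF SZ_Qf SC_Hf Qf_rec])

lemma SC_Gf: "SC Gf"
proof -
  have "SC (\<lambda>x. 2 * ((1/x)^2 * Qf x))"
    by (intro SC_scale SC_mult SC_ip0 SC_Qf) auto
  then show ?thesis by (simp add: Gf_def[abs_def])
qed

lemma SC_Ff: "SC Ff"
  by (rule SC_telescope[OF SZ_Ff SC_Gf Ff_rec])



definition T5 :: "real \<Rightarrow> real" where
  "T5 x = (1/x) * (1/(x+1)) * (1/(x+2)) * (1/(x+3)) * (1/(x+4))"

definition T6 :: "real \<Rightarrow> real" where
  "T6 x = T5 x * (1/(x+5))"

lemma SZ_T5: "SZ T5"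
proof -
  have "SZ (\<lambda>x. (1/x) * (1/(x+1)) * (1/(x+2)) * (1/(x+3)) * (1/(x+4)))"
    by (intro SZ_mult SZ_ip1 SZ_ip01) auto
  then show ?thesis by (simp add: T5_def[abs_def])
qed

lemma SZ_T6: "SZ T6"
proof -
  have "SZ (\<lambda>x. T5 x * (1/(x+5)))"
    by (intro SZ_mult SZ_ip1 SZ_T5) auto
  then show ?thesis by (simp add: T6_def[abs_def])
qed

lemma T_diff:
  assumes x: "x > 0"
  shows "T5 x - T5 (x + 1) = 5 * (T5 x * (1/(x+5)))" "T6 x - T6 (x + 1) = 6 * (T6 x * (1/(x+6)))"
proof -
  define b0 b1 b2 b3 b4 b5 b6 where "b0 = 1/x" "b1 = 1/(x+1)" "b2 = 1/(x+2)" "b3 = 1/(x+3)"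
     "b4 = 1/(x+4)" "b5 = 1/(x+5)" "b6 = 1/(x+6)"
  note d = b0_b1_b2_b3_b4_b5_b6_def
  have r: "x*b0 = 1" "(x+1)*b1 = 1" "(x+2)*b2 = 1" "(x+3)*b3 = 1" "(x+4)*b4 = 1" "(x+5)*b5 = 1" "(x+6)*b6 = 1"
    using x by (auto simp: d)
  have e: "1/x = b0" "1/(x+1) = b1" "1/(x+2) = b2" "1/(x+3) = b3" "1/(x+4) = b4" "1/(x+5) = b5" "1/(x+6) = b6"
    "1/(x+1+1) = b2" "1/(x+1+2) = b3" "1/(x+1+3) = b4" "1/(x+1+4) = b5" "1/(x+1+5) = b6"
    by (auto simp: d add.assoc)
  show "T5 x - T5 (x + 1) = 5 * (T5 x * (1/(x+5)))"
    unfolding T5_def e using r by algebra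
  show "T6 x - T6 (x + 1) = 6 * (T6 x * (1/(x+6)))"
    unfolding T6_def T5_def e using r by algebra
qed

lemma pm2:
  fixes a b c :: real
  assumes "0 \<le> b" "b \<le> a" "0 \<le> c" "c \<le> a"
  shows "b ^ i * c ^ j \<le> a ^ (i + j)"
proof -
  have "b ^ i * c ^ j \<le> a ^ i * a ^ j"
    using assms by (intro mult_mono power_mono) auto
  then show ?thesis by (simp add: power_add)
qed

lemma pm3:
  fixes a b c d :: real
  assumes "0 \<le> b" "b \<le> a" "0 \<le> c" "c \<le> a" "0 \<le> d" "d \<le> a"
  shows "b ^ i * c ^ j * d ^ k \<le> a ^ (i + j + k)"
proof -
  have "b ^ i * c ^ j * d ^ k \<le> a ^ (i + j) * a ^ k"
    using assms pm2[of b a c i j] by (intro mult_mono power_mono) auto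
  then show ?thesis by (simp add: power_add)
qed

lemma Hf_bound:
  assumes x1: "x \<ge> 1"
  shows "Hf x \<le> 9 * (1/x) ^ 6"
proof -
  have x: "x > 0" using x1 by simp
  have b: "0 \<le> 1/(x+a)" "1/(x+a) \<le> 1/x" if "a \<ge> 0" for a :: real
    using x that by (auto simp: frac_le)
  have b0: "0 \<le> 1/x" using x by simp
  have t1: "(1/x)^1 * (1/(x+1))^4 * (1/(x+2))^1 \<le> (1/x)^6"
    using pm3[OF b0 order_refl b(1,2)[of 1] b(1,2)[of 2], of 1 4 1] by simp
  have t2: "(1/(x+1))^4 * (1/(x+2))^2 \<le> (1/x)^6"
    using pm2[OF b(1,2)[of 1] b(1,2)[of 2], of 4 2] by simp
  have t3: "(1/(x+1))^2 * (1/(x+2))^4 \<le> (1/x)^6"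
    using pm2[OF b(1,2)[of 1] b(1,2)[of 2], of 2 4] by simp
  have t4: "(1/(x+2))^4 * (1/(x+3))^2 \<le> (1/x)^6"
    using pm2[OF b(1,2)[of 2] b(1,2)[of 3], of 4 2] by simp
  have t5: "(1/(x+1))^1 * (1/(x+2))^4 * (1/(x+3))^1 \<le> (1/x)^6"
    using pm3[OF b(1,2)[of 1] b(1,2)[of 2] b(1,2)[of 3], of 1 4 1] by simp
  have t6: "(1/x)^1 * (1/(x+1))^4 * (1/(x+2))^4 \<le> (1/x)^9"
    using pm3[OF b0 order_refl b(1,2)[of 1] b(1,2)[of 2], of 1 4 4] by simp
  have t69: "(1/x)^9 \<le> (1/x)^6"
    using x1 by (intro power_decreasing) (auto simp: divide_le_eq)
  have "Hf x \<le> 11/60 * (1/x)^6 + 53/60 * (1/x)^6 + 29/15 * (1/x)^6 + 3/2 * (1/x)^6 + 7/3 * (1/x)^6 + 6/5 * (1/x)^6"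
    unfolding Hf_def using t1 t2 t3 t4 t5 t6 t69 by (intro add_mono mult_left_mono) auto
  also have "\<dots> \<le> 9 * (1/x) ^ 6" using b0 by simp
  finally show ?thesis .
qed


lemma lbi:
  assumes "x \<ge> 1" "(i::real) \<ge> 0"
  shows "(1/x) / (i+1) \<le> 1/(x+i)"
proof -
  have "x + i \<le> (i + 1) * x" using assms mult_left_mono[of 1 x i] by (simp add: algebra_simps)
  then show ?thesis using assms by (simp add: field_simps)
qed

lemma T5_pos: "x > 0 \<Longrightarrow> T5 x \<ge> 0"
  unfolding T5_def by simp

lemma T6_lb:
  assumes x1: "x \<ge> 1"
  shows "(1/x)^6 / 720 \<le> T5 x * (1/(x+5))"
proof -
  have x: "x > 0" using x1 by simp
  have "(1/x) * ((1/x)/(1+1)) * ((1/x)/(2+1)) * ((1/x)/(3+1)) * ((1/x)/(4+1)) * ((1/x)/(5+1))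
      \<le> (1/x) * (1/(x+1)) * (1/(x+2)) * (1/(x+3)) * (1/(x+4)) * (1/(x+5))"
    using x lbi[OF x1, of 1] lbi[OF x1, of 2] lbi[OF x1, of 3] lbi[OF x1, of 4] lbi[OF x1, of 5]
    by (intro mult_mono) auto
  then show ?thesis by (simp add: T5_def power_def eval_nat_numeral field_simps)
qed

lemma Qf_le:
  assumes x1: "x \<ge> 1"
  shows "Qf x \<le> 1296 * T5 x"
proof -
  have main: "Qf y - Qf (y + 1) \<le> 1296 * T5 y - 1296 * T5 (y + 1)" if y: "y \<ge> 1" for y
  proof -
  have "Qf y - Qf (y + 1) = Hf y" using Qf_rec[of y] y by simp
  also have "\<dots> \<le> 9 * (1/y)^6" using Hf_bound[OF y] .
  also have "\<dots> \<le> 6480 * (T5 y * (1/(y+5)))" using T6_lb[OF y] by simp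
  also have "\<dots> = 1296 * T5 y - 1296 * T5 (y + 1)" using T_diff(1)[of y] y by simp
  finally show ?thesis .
  qed
  show ?thesis by (rule telescope_le[OF main SZ_tendsto[OF SZ_Qf] SZ_tendsto[OF SZ_scale[OF SZ_T5]] x1])
qed

lemma Ff_le:
  assumes x1: "x \<ge> 1"
  shows "Ff x \<le> 18144 * T6 x"
proof -
  have main: "Ff y - Ff (y + 1) \<le> 18144 * T6 y - 18144 * T6 (y + 1)" if y: "y \<ge> 1" for y
  proof -
  have yp: "y > 0" using y by simp
  have sq: "(1/y)^2 \<le> 42 * ((1/(y+5)) * (1/(y+6)))"
  proof -
    have "((1/y)/(5+1)) * ((1/y)/(6+1)) \<le> (1/(y+5)) * (1/(y+6))"
      using yp lbi[OF y, of 5] lbi[OF y, of 6] by (intro mult_mono) auto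
    then show ?thesis by (simp add: power2_eq_square)
  qed
  have "Ff y - Ff (y + 1) = Gf y" using Ff_rec[of y] yp by simp
  also have "\<dots> = 2 * ((1/y)^2 * Qf y)" by (simp add: Gf_def)
  also have "\<dots> \<le> 2 * ((1/y)^2 * (1296 * T5 y))"
    using Qf_le[OF y] by (intro mult_left_mono) auto
  also have "\<dots> \<le> 2 * ((42 * ((1/(y+5)) * (1/(y+6)))) * (1296 * T5 y))"
    using sq T5_pos[OF yp] by (intro mult_left_mono mult_right_mono) auto
  also have "\<dots> = 18144 * (6 * (T6 y * (1/(y+6))))" by (simp add: T6_def)
  also have "\<dots> = 18144 * T6 y - 18144 * T6 (y + 1)" using T_diff(2)[of y] yp by simp
  finally show ?thesis .
  qed
  show ?thesis by (rule telescope_le[OF main SZ_tendsto[OF SZ_Ff] SZ_tendsto[OF SZ_scale[OF SZ_T6]] x1])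
qed

lemma T6_ub:
  assumes x: "x > 0"
  shows "T6 x \<le> (1/x)^4 * (1/(x+1))^2"
proof -
  have b: "0 \<le> 1/(x+a)" "1/(x+a) \<le> 1/x" if "a \<ge> 0" for a :: real
    using x that by (auto simp: frac_le)
  have b1: "1/(x+5) \<le> 1/(x+1)" using x by (auto simp: frac_le)
  have "(1/x) * (1/(x+1)) * (1/(x+2)) * (1/(x+3)) * (1/(x+4)) * (1/(x+5))
      \<le> (1/x) * (1/(x+1)) * (1/x) * (1/x) * (1/x) * (1/(x+1))"
    using x b[of 2] b[of 3] b[of 4] b[of 5] b1 by (intro mult_mono) auto
  then show ?thesis by (simp add: T6_def T5_def power_def eval_nat_numeral algebra_simps)
qed

lemma f_lam_eq:
  assumes x: "x > 0"
  shows "- f_lam lam x = Ff x + (lam - 4) / 12 * ((1/x)^3 * (1/(x+1))^2)"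
proof -
  define a1 a2 where "a1 = 1/x" "a2 = 1/(x+1)"
  have r: "x*a1 = 1" "(x+1)*a2 = 1" using x by (auto simp: a1_a2_def)
  have e: "1/x = a1" "1/(x+1) = a2" by (auto simp: a1_a2_def)
  have q: "(x\<^sup>2 + lam * x + 12) / (12 * x ^ 4 * (x + 1)\<^sup>2) = (x\<^sup>2 + lam * x + 12) / 12 * a1^4 * a2^2"
    using x by (simp add: a1_a2_def field_simps)
  show ?thesis unfolding f_lam_def Ff_def Rf_def q e using r by algebra
qed



theorem theorem1p1:
  fixes lam :: real
  shows "completely_monotonic_on {0<..} (\<lambda>x. - f_lam lam x) \<longleftrightarrow> lam \<ge> 4"
proof
  assume "lam \<ge> 4"
  then have "SC (\<lambda>x. Ff x + (lam - 4) / 12 * ((1/x)^3 * (1/(x+1))^2))"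
    by (intro SC_add SC_Ff SC_scale SC_mult SC_ip0 SC_ip) auto
  then have "SC (\<lambda>x. - f_lam lam x)"
    by (rule SC_cong) (simp add: f_lam_eq)
  then show "completely_monotonic_on {0<..} (\<lambda>x. - f_lam lam x)"
    by (rule SC_cm)
next
  assume cm: "completely_monotonic_on {0<..} (\<lambda>x. - f_lam lam x)"
  have nn: "- f_lam lam x \<ge> 0" if "x > 0" for x
    using cm that unfolding completely_monotonic_on_def
    by (metis (no_types, lifting) funpow_0 greaterThan_iff mult_1 power_0)
  show "lam \<ge> 4"
  proof (rule ccontr)
    assume "\<not> lam \<ge> 4"
    define c where "c = (4 - lam) / 12"
    have c: "c > 0" using \<open>\<not> lam \<ge> 4\<close> by (simp add: c_def)
    define x where "x = 18144 / c + 1"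
    have x1: "x \<ge> 1" using c by (simp add: x_def)
    have xp: "x > 0" using x1 by simp
    have small: "18144 * (1/x) < c"
    proof -
      have "18144 < c * x" using c by (simp add: x_def algebra_simps)
      then show ?thesis using xp by (simp add: field_simps)
    qed
    define A where "A = (1/x)^3 * (1/(x+1))^2"
    have A: "A > 0" using xp by (simp add: A_def)
    have ca: "(lam - 4) / 12 * A = - (c * A)" unfolding c_def by (simp add: field_simps)
    have "- f_lam lam x = Ff x + (lam - 4) / 12 * A"
      using f_lam_eq[OF xp, of lam] by (simp only: A_def)
    also have "\<dots> = Ff x - c * A" using ca by simp
    also have "\<dots> \<le> 18144 * T6 x - c * A" using Ff_le[OF x1] by simp
    also have "\<dots> \<le> 18144 * ((1/x)^4 * (1/(x+1))^2) - c * A"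
      using T6_ub[OF xp] by simp
    also have "\<dots> = (18144 * (1/x) - c) * A"
    proof -
      have p4: "(1/x)^4 = (1/x) * (1/x)^3" by (simp add: numeral_eq_Suc)
      show ?thesis unfolding p4 A_def by (simp add: algebra_simps)
    qed
    also have "\<dots> < 0" using small A by (simp add: mult_neg_pos)
    finally show False using nn[OF xp] by simp
  qed
qed

end
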